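(* Let $M$ be a smooth $n$-manifold with a torsion-free linear connection $\nabla$ and a symmetric $(0,2)$-tensor field $c$, let $\overline g_{\nabla,c}$ be the modified Riemannian extension on $T^{\ast}M$, and let $\widetilde{\nabla}$ be the linear connection on $T^{\ast}M$ given in the adapted frame by $\widetilde{\nabla}_{E_{\overline{i}}}E_{\overline{j}}=0$, $\widetilde{\nabla}_{E_{\overline{i}}}E_{j}=0$, $\widetilde{\nabla}_{E_{i}}E_{\overline{j}}=-\Gamma^{j}_{ih}E_{\overline{h}}$, $\widetilde{\nabla}_{E_{i}}E_{j}=\Gamma^{h}_{ij}E_{h}+\tfrac12(\nabla_i c_{jh}+\nabla_j c_{ih}-\nabla_h c_{ij})E_{\overline{h}}$. Then the scalar curvature $\widetilde r=\widetilde R_{\alpha\beta}(\overline g_{\nabla,c})^{\alpha\beta}$ of $\widetilde\nabla$ with respect to $\overline g_{\nabla,c}$ vanishes identically.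
   Context: Summation convention; $\overline{i}=n+i$; Greek indices run over the full adapted frame $\{E_j,E_{\overline j}\}$. $\Gamma^h_{ij}$ are the coefficients of $\nabla$ in local coordinates $(x^i)$; $\nabla_ic_{jk}$ the components of $\nabla c$. On $T^{\ast}M$ use induced coordinates $(x^i,p_i)$, $\partial_{\overline i}=\partial/\partial p_i$, and the adapted frame $E_j=\partial_j+p_a\Gamma^a_{hj}\partial_{\overline h}$, $E_{\overline j}=\partial_{\overline j}$. The modified Riemannian extension is $\overline{g}_{\nabla,c}(E_i,E_j)=c_{ij}$, $\overline{g}_{\nabla,c}(E_i,E_{\overline j})=\overline{g}_{\nabla,c}(E_{\overline j},E_i)=\delta_i^j$, $\overline{g}_{\nabla,c}(E_{\overline i},E_{\overline j})=0$, and $(\overline g_{\nabla,c})^{\alpha\beta}$ denotes its inverse. $\widetilde R_{\alpha\beta}=\widetilde R_{\sigma\alpha\beta}^{\ \ \ \ \sigma}$ is the Ricci tensor of $\widetilde\nabla$, where $\widetilde R(E_\alpha,E_\beta)E_\gamma=\widetilde R_{\alpha\beta\gamma}^{\ \ \ \ \varepsilon}E_\varepsilon$ and $\widetilde R(X,Y)=\widetilde\nabla_X\widetilde\nabla_Y-\widetilde\nabla_Y\widetilde\nabla_X-\widetilde\nabla_{[X,Y]}$. *)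

theory Defs
  imports "HOL-Analysis.Analysis"
begin

text \<open>The base manifold M is represented by a coordinate
domain U (an open subset of real^'n, n = CARD('n)); T*M over U has induced coordinates
(x,p) in real^'n \<times> real^'n. Greek indices range over 'n + 'n: Inl j is j, Inr j is the
barred index n+j.\<close>

type_synonym 'n pt = "(real^'n) \<times> (real^'n)"
type_synonym 'n gidx = "'n + 'n"

definition pdM :: "(real^('n::finite) \<Rightarrow> real) \<Rightarrow> 'n \<Rightarrow> real^'n \<Rightarrow> real" where
  "pdM f i x = frechet_derivative f (at x) (axis i 1)"

fun Ck_on :: "nat \<Rightarrow> (real^('n::finite) \<Rightarrow> real) \<Rightarrow> (real^'n) set \<Rightarrow> bool" where
  "Ck_on 0 f U = continuous_on U f"
| "Ck_on (Suc k) f U = ((\<forall>x\<in>U. f differentiable (at x)) \<and> (\<forall>i. Ck_on k (\<lambda>x. pdM f i x) U))"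

definition smooth_fun_on :: "(real^'n \<Rightarrow> real) \<Rightarrow> (real^'n) set \<Rightarrow> bool" where
  "smooth_fun_on f U = (\<forall>k. Ck_on k f U)"

text \<open>Components of \<nabla>c: \<nabla>_i c_{jk} = \<partial>_i c_{jk} - \<Gamma>^a_{ij} c_{ak} - \<Gamma>^a_{ik} c_{ja}.
 Gam h i j x is \<Gamma>^h_{ij}(x); c j k x is c_{jk}(x).\<close>
definition cov_c :: "(('n::finite) \<Rightarrow> 'n \<Rightarrow> 'n \<Rightarrow> real^'n \<Rightarrow> real) \<Rightarrow> ('n \<Rightarrow> 'n \<Rightarrow> real^'n \<Rightarrow> real)
    \<Rightarrow> 'n \<Rightarrow> 'n \<Rightarrow> 'n \<Rightarrow> real^'n \<Rightarrow> real" where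
  "cov_c Gam c i j k x = pdM (c j k) i x
      - (\<Sum>a\<in>UNIV. Gam a i j x * c a k x) - (\<Sum>a\<in>UNIV. Gam a i k x * c j a x)"

definition cbasis :: "('n::finite) gidx \<Rightarrow> 'n pt" where
  "cbasis \<mu> = (case \<mu> of Inl j \<Rightarrow> (axis j 1, 0) | Inr j \<Rightarrow> (0, axis j 1))"

definition cd :: "(('n::finite) pt \<Rightarrow> real) \<Rightarrow> 'n gidx \<Rightarrow> 'n pt \<Rightarrow> real" where
  "cd f \<mu> z = frechet_derivative f (at z) (cbasis \<mu>)"

type_synonym 'n vfield = "'n pt \<Rightarrow> 'n gidx \<Rightarrow> real"

definition vf_app :: "('n::finite) vfield \<Rightarrow> ('n pt \<Rightarrow> real) \<Rightarrow> 'n pt \<Rightarrow> real" where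
  "vf_app X f z = (\<Sum>\<mu>\<in>UNIV. X z \<mu> * cd f \<mu> z)"

definition lie_bracket :: "('n::finite) vfield \<Rightarrow> 'n vfield \<Rightarrow> 'n vfield" where
  "lie_bracket X Y z \<mu> = vf_app X (\<lambda>w. Y w \<mu>) z - vf_app Y (\<lambda>w. X w \<mu>) z"

definition adapted_frame :: "(('n::finite) \<Rightarrow> 'n \<Rightarrow> 'n \<Rightarrow> real^'n \<Rightarrow> real) \<Rightarrow> 'n gidx \<Rightarrow> 'n vfield" where
  "adapted_frame Gam \<alpha> z \<mu> =
     (case \<alpha> of
        Inl j \<Rightarrow> (case \<mu> of Inl k \<Rightarrow> (if k = j then 1 else 0)
                         | Inr h \<Rightarrow> (\<Sum>a\<in>UNIV. snd z $ a * Gam a h j (fst z)))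
      | Inr j \<Rightarrow> (if \<mu> = Inr j then 1 else 0))"

definition frame_comp :: "(('n::finite) \<Rightarrow> 'n \<Rightarrow> 'n \<Rightarrow> real^'n \<Rightarrow> real) \<Rightarrow> 'n pt \<Rightarrow> ('n gidx \<Rightarrow> real) \<Rightarrow> 'n gidx \<Rightarrow> real" where
  "frame_comp Gam z V = (THE a. \<forall>\<mu>. V \<mu> = (\<Sum>\<beta>\<in>UNIV. a \<beta> * adapted_frame Gam \<beta> z \<mu>))"

text \<open>Linear connection on T*M determined by its frame coefficients:
  \<nabla>_{E_\<alpha>} E_\<beta> = \<omega> \<alpha> \<beta> \<gamma> E_\<gamma>, extended to arbitrary fields by linearity and Leibniz.\<close>
definition frame_conn :: "(('n::finite) \<Rightarrow> 'n \<Rightarrow> 'n \<Rightarrow> real^'n \<Rightarrow> real)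
    \<Rightarrow> ('n gidx \<Rightarrow> 'n gidx \<Rightarrow> 'n gidx \<Rightarrow> 'n pt \<Rightarrow> real) \<Rightarrow> 'n vfield \<Rightarrow> 'n vfield \<Rightarrow> 'n vfield" where
  "frame_conn Gam \<omega> X Y z \<mu> =
     (\<Sum>\<gamma>\<in>UNIV.
        (vf_app X (\<lambda>w. frame_comp Gam w (Y w) \<gamma>) z
         + (\<Sum>\<alpha>\<in>UNIV. \<Sum>\<beta>\<in>UNIV. frame_comp Gam z (X z) \<alpha> * frame_comp Gam z (Y z) \<beta> * \<omega> \<alpha> \<beta> \<gamma> z))
        * adapted_frame Gam \<gamma> z \<mu>)"

definition curv :: "(('n::finite) \<Rightarrow> 'n \<Rightarrow> 'n \<Rightarrow> real^'n \<Rightarrow> real)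
    \<Rightarrow> ('n gidx \<Rightarrow> 'n gidx \<Rightarrow> 'n gidx \<Rightarrow> 'n pt \<Rightarrow> real) \<Rightarrow> 'n vfield \<Rightarrow> 'n vfield \<Rightarrow> 'n vfield \<Rightarrow> 'n vfield" where
  "curv Gam \<omega> X Y Z z \<mu> =
     frame_conn Gam \<omega> X (frame_conn Gam \<omega> Y Z) z \<mu>
     - frame_conn Gam \<omega> Y (frame_conn Gam \<omega> X Z) z \<mu>
     - frame_conn Gam \<omega> (lie_bracket X Y) Z z \<mu>"

definition curv_comp where
  "curv_comp Gam \<omega> \<alpha> \<beta> \<gamma> \<epsilon> z =
     frame_comp Gam z (curv Gam \<omega> (adapted_frame Gam \<alpha>) (adapted_frame Gam \<beta>) (adapted_frame Gam \<gamma>) z) \<epsilon>"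

definition ricci_comp where
  "ricci_comp Gam \<omega> \<alpha> \<beta> z = (\<Sum>\<sigma>\<in>UNIV. curv_comp Gam \<omega> \<sigma> \<alpha> \<beta> \<sigma> z)"

text \<open>Modified Riemannian extension, components in the adapted frame (as a matrix).\<close>
definition mod_riem_ext :: "(('n::finite) \<Rightarrow> 'n \<Rightarrow> real^'n \<Rightarrow> real) \<Rightarrow> 'n pt \<Rightarrow> real^('n gidx)^('n gidx)" where
  "mod_riem_ext c z = (\<chi> \<alpha> \<beta>.
     (case \<alpha> of
        Inl i \<Rightarrow> (case \<beta> of Inl j \<Rightarrow> c i j (fst z) | Inr j \<Rightarrow> (if i = j then 1 else 0))
      | Inr i \<Rightarrow> (case \<beta> of Inl j \<Rightarrow> (if i = j then 1 else 0) | Inr j \<Rightarrow> 0)))"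

definition conn_coeffs :: "(('n::finite) \<Rightarrow> 'n \<Rightarrow> 'n \<Rightarrow> real^'n \<Rightarrow> real) \<Rightarrow> ('n \<Rightarrow> 'n \<Rightarrow> real^'n \<Rightarrow> real)
    \<Rightarrow> 'n gidx \<Rightarrow> 'n gidx \<Rightarrow> 'n gidx \<Rightarrow> 'n pt \<Rightarrow> real" where
  "conn_coeffs Gam c \<alpha> \<beta> \<gamma> z =
     (case \<alpha> of
        Inr i \<Rightarrow> 0
      | Inl i \<Rightarrow>
          (case \<beta> of
             Inr j \<Rightarrow> (case \<gamma> of Inl h \<Rightarrow> 0 | Inr h \<Rightarrow> - Gam j i h (fst z))
           | Inl j \<Rightarrow> (case \<gamma> of
                         Inl h \<Rightarrow> Gam h i j (fst z)
                       | Inr h \<Rightarrow> (cov_c Gam c i j h (fst z) + cov_c Gam c j i h (fst z)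
                                   - cov_c Gam c h i j (fst z)) / 2)))"

definition scalar_curv where
  "scalar_curv Gam c z =
     (\<Sum>\<alpha>\<in>UNIV. \<Sum>\<beta>\<in>UNIV. ricci_comp Gam (conn_coeffs Gam c) \<alpha> \<beta> z * matrix_inv (mod_riem_ext c z) $ \<alpha> $ \<beta>)"

end

theory Submission imports Defs begin

lemma sumP: "(\<Sum>a\<in>(UNIV::('a::finite + 'b::finite) set). f a) = (\<Sum>i\<in>UNIV. f (Inl i)) + (\<Sum>j\<in>UNIV. f (Inr j))"
proof -
  have "(\<Sum>a\<in>(UNIV::('a + 'b) set). f a) = (\<Sum>a\<in>(UNIV <+> UNIV). f a)" by simp
  also have "\<dots> = (\<Sum>i\<in>UNIV. f (Inl i)) + (\<Sum>j\<in>UNIV. f (Inr j))"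
    by (subst sum.Plus) (auto simp: comp_def)
  finally show ?thesis .
qed

definition S where "S Gam z h j = (\<Sum>a\<in>UNIV. snd z $ a * Gam a h j (fst z))"

definition fcx :: "(('n::finite) \<Rightarrow> 'n \<Rightarrow> 'n \<Rightarrow> real^'n \<Rightarrow> real) \<Rightarrow> 'n pt \<Rightarrow> ('n gidx \<Rightarrow> real) \<Rightarrow> 'n gidx \<Rightarrow> real" where
  "fcx Gam z V \<gamma> = (case \<gamma> of Inl k \<Rightarrow> V (Inl k) | Inr h \<Rightarrow> V (Inr h) - (\<Sum>j\<in>UNIV. V (Inl j) * S Gam z h j))"

lemma frame_sum_Inl: "(\<Sum>\<beta>\<in>UNIV. a \<beta> * adapted_frame Gam \<beta> z (Inl k)) = a (Inl k)"
  by (simp add: sumP adapted_frame_def if_distrib cong: if_cong)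

lemma frame_sum_Inr: "(\<Sum>\<beta>\<in>UNIV. a \<beta> * adapted_frame Gam \<beta> z (Inr h)) = a (Inr h) + (\<Sum>j\<in>UNIV. a (Inl j) * S Gam z h j)"
  by (simp add: sumP adapted_frame_def S_def if_distrib cong: if_cong)

lemma frame_repr: "V \<mu> = (\<Sum>\<beta>\<in>UNIV. fcx Gam z V \<beta> * adapted_frame Gam \<beta> z \<mu>)"
  by (cases \<mu>) (simp_all add: frame_sum_Inl frame_sum_Inr fcx_def)

lemma frame_uniq:
  assumes "\<forall>\<mu>. V \<mu> = (\<Sum>\<beta>\<in>UNIV. a \<beta> * adapted_frame Gam \<beta> z \<mu>)"
  shows "a = fcx Gam z V"
proof
  fix \<gamma> show "a \<gamma> = fcx Gam z V \<gamma>"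
    using assms by (cases \<gamma>) (simp_all add: frame_sum_Inl frame_sum_Inr fcx_def)
qed

lemma fc_eq: "frame_comp Gam z V = fcx Gam z V"
  unfolding frame_comp_def
  by (rule the_equality) (auto intro: frame_repr frame_uniq)

lemma fc_lin: "frame_comp Gam z V = a" if "\<And>\<mu>. V \<mu> = (\<Sum>\<beta>\<in>UNIV. a \<beta> * adapted_frame Gam \<beta> z \<mu>)"
  using frame_uniq[of V a Gam z] that by (simp add: fc_eq)

lemma mif1[simp]: "(if P then (1::real) else 0) * y = (if P then y else 0)" by simp
lemma mif2[simp]: "y * (if P then (1::real) else 0) = (if P then y else 0)" by simp

lemma mif3[simp]: "(if P then y else (0::real)) * x = (if P then y * x else 0)" by simp
lemma mif4[simp]: "x * (if P then y else (0::real)) = (if P then x * y else 0)" by simp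

lemma fc_frame: "frame_comp Gam z (adapted_frame Gam \<beta> z) = (\<lambda>\<gamma>. if \<gamma> = \<beta> then 1 else 0)"
  by (rule fc_lin) simp

lemma cd_const: "cd (\<lambda>_. k) \<mu> z = 0"
proof -
  have "((\<lambda>_. k) has_derivative (\<lambda>_. 0)) (at z)" by (rule has_derivative_const)
  then have "frechet_derivative (\<lambda>_. k) (at z) = (\<lambda>_. 0)" by (metis frechet_derivative_at)
  then show ?thesis by (simp add: cd_def)
qed

lemma vf_const: "vf_app X (\<lambda>_. k) z = 0"
  by (simp add: vf_app_def cd_const)

lemma fc_conn: "frame_comp Gam z (frame_conn Gam \<omega> X Y z) = (\<lambda>\<gamma>.
        vf_app X (\<lambda>w. frame_comp Gam w (Y w) \<gamma>) z
         + (\<Sum>\<alpha>\<in>UNIV. \<Sum>\<beta>\<in>UNIV. frame_comp Gam z (X z) \<alpha> * frame_comp Gam z (Y z) \<beta> * \<omega> \<alpha> \<beta> \<gamma> z))"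
  by (rule fc_lin) (simp add: frame_conn_def)

lemma fc_conn_frame: "frame_comp Gam w (frame_conn Gam \<omega> (adapted_frame Gam \<alpha>) (adapted_frame Gam \<beta>) w) = (\<lambda>\<gamma>. \<omega> \<alpha> \<beta> \<gamma> w)"
  by (simp add: fc_conn fc_frame vf_const)

lemma frame_Inl: "adapted_frame Gam \<alpha> w (Inl k) = (case \<alpha> of Inl j \<Rightarrow> if k = j then 1 else 0 | Inr j \<Rightarrow> 0)"
  by (cases \<alpha>) (simp_all add: adapted_frame_def)

lemma bracket_Inl: "lie_bracket (adapted_frame Gam \<sigma>) (adapted_frame Gam \<alpha>) z (Inl k) = 0"
  unfolding lie_bracket_def frame_Inl by (simp add: vf_const)

lemma fc_bracket_Inl: "frame_comp Gam z (lie_bracket (adapted_frame Gam \<sigma>) (adapted_frame Gam \<alpha>) z) (Inl k) = 0"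
  by (simp add: fc_eq fcx_def bracket_Inl)

lemma fc_repr': "V = (\<lambda>\<mu>. \<Sum>\<beta>\<in>UNIV. frame_comp Gam z V \<beta> * adapted_frame Gam \<beta> z \<mu>)"
  by (rule ext) (simp add: fc_eq frame_repr[symmetric])

lemma fc_diff3: "frame_comp Gam z (\<lambda>\<mu>. A \<mu> - B \<mu> - C \<mu>) = (\<lambda>\<gamma>. frame_comp Gam z A \<gamma> - frame_comp Gam z B \<gamma> - frame_comp Gam z C \<gamma>)"
proof (rule fc_lin)
  fix \<mu>
  have "A \<mu> - B \<mu> - C \<mu> = (\<Sum>\<beta>\<in>UNIV. frame_comp Gam z A \<beta> * adapted_frame Gam \<beta> z \<mu>)
     - (\<Sum>\<beta>\<in>UNIV. frame_comp Gam z B \<beta> * adapted_frame Gam \<beta> z \<mu>)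
     - (\<Sum>\<beta>\<in>UNIV. frame_comp Gam z C \<beta> * adapted_frame Gam \<beta> z \<mu>)"
    by (subst (1) fc_repr'[of A Gam z], subst (1) fc_repr'[of B Gam z], subst (1) fc_repr'[of C Gam z]) simp
  also have "\<dots> = (\<Sum>\<beta>\<in>UNIV. (frame_comp Gam z A \<beta> - frame_comp Gam z B \<beta> - frame_comp Gam z C \<beta>) * adapted_frame Gam \<beta> z \<mu>)"
    by (simp add: sum_subtractf left_diff_distrib)
  finally show "A \<mu> - B \<mu> - C \<mu> = \<dots>" .
qed

lemma swp: "(\<Sum>a\<in>(UNIV::'a::finite set). \<Sum>b\<in>(UNIV::'b::finite set). if a = s then f a b else (0::real)) = (\<Sum>b\<in>UNIV. f s b)"
  by (subst sum.swap) simp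

lemma curv_comp_formula:
  assumes w0: "\<And>i \<beta> \<gamma> z. \<omega> (Inr i) \<beta> \<gamma> z = 0"
  shows "curv_comp Gam \<omega> \<sigma> \<alpha> \<beta> \<epsilon> z =
     vf_app (adapted_frame Gam \<sigma>) (\<omega> \<alpha> \<beta> \<epsilon>) z + (\<Sum>\<delta>\<in>UNIV. \<omega> \<alpha> \<beta> \<delta> z * \<omega> \<sigma> \<delta> \<epsilon> z)
   - vf_app (adapted_frame Gam \<alpha>) (\<omega> \<sigma> \<beta> \<epsilon>) z - (\<Sum>\<delta>\<in>UNIV. \<omega> \<sigma> \<beta> \<delta> z * \<omega> \<alpha> \<delta> \<epsilon> z)"
proof -
  have e: "curv Gam \<omega> (adapted_frame Gam \<sigma>) (adapted_frame Gam \<alpha>) (adapted_frame Gam \<beta>) z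
    = (\<lambda>\<mu>. frame_conn Gam \<omega> (adapted_frame Gam \<sigma>) (frame_conn Gam \<omega> (adapted_frame Gam \<alpha>) (adapted_frame Gam \<beta>)) z \<mu>
     - frame_conn Gam \<omega> (adapted_frame Gam \<alpha>) (frame_conn Gam \<omega> (adapted_frame Gam \<sigma>) (adapted_frame Gam \<beta>)) z \<mu>
     - frame_conn Gam \<omega> (lie_bracket (adapted_frame Gam \<sigma>) (adapted_frame Gam \<alpha>)) (adapted_frame Gam \<beta>) z \<mu>)"
    by (rule ext) (simp add: curv_def)
  have b: "(\<Sum>\<delta>\<in>UNIV. frame_comp Gam z (lie_bracket (adapted_frame Gam \<sigma>) (adapted_frame Gam \<alpha>) z) \<delta> * \<omega> \<delta> \<beta> \<epsilon> z) = 0"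
    by (simp add: sumP fc_bracket_Inl w0)
  show ?thesis
    unfolding curv_comp_def e fc_diff3
    using b by (simp add: fc_conn fc_conn_frame fc_frame vf_const swp)
qed

lemma vf_Inr: "vf_app (adapted_frame Gam (Inr h)) f z = cd f (Inr h) z"
  by (simp add: vf_app_def sumP adapted_frame_def)

lemma cd_fst:
  assumes "g differentiable (at (fst z))"
  shows "cd (\<lambda>w. g (fst w)) (Inr h) z = 0"
proof -
  obtain g' where g': "(g has_derivative g') (at (fst z))" using assms by (auto simp: differentiable_def)
  have "((\<lambda>w. g (fst w)) has_derivative (\<lambda>v. g' (fst v))) (at z)"
    using has_derivative_compose[OF has_derivative_fst[OF has_derivative_ident] g'] by simp
  then have "frechet_derivative (\<lambda>w. g (fst w)) (at z) = (\<lambda>v. g' (fst v))" by (metis frechet_derivative_at)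
  moreover have "g' 0 = 0" using g' has_derivative_linear linear_0 by blast
  ultimately show ?thesis by (simp add: cd_def cbasis_def)
qed

lemma cd_fst_neg:
  assumes "g differentiable (at (fst z))"
  shows "cd (\<lambda>w. - g (fst w)) (Inr h) z = 0"
  using cd_fst[of "\<lambda>y. - g y" z h] assms by simp

lemma w0: "conn_coeffs Gam c (Inr i) \<beta> \<gamma> z = 0"
  by (simp add: conn_coeffs_def)

lemma cc_Inr[simp]: "conn_coeffs Gam c (Inr i) \<beta> \<gamma> = (\<lambda>_. 0)"
  by (rule ext) (simp add: conn_coeffs_def)
lemma cc_LRL[simp]: "conn_coeffs Gam c (Inl i) (Inr j) (Inl h) = (\<lambda>_. 0)"
  by (rule ext) (simp add: conn_coeffs_def)
lemma cc_LRR[simp]: "conn_coeffs Gam c (Inl i) (Inr j) (Inr h) = (\<lambda>z. (\<lambda>y. - Gam j i h y) (fst z))"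
  by (rule ext) (simp add: conn_coeffs_def)
lemma cc_LLL[simp]: "conn_coeffs Gam c (Inl i) (Inl j) (Inl h) = (\<lambda>z. Gam h i j (fst z))"
  by (rule ext) (simp add: conn_coeffs_def)

lemma ric1: "ricci_comp Gam (conn_coeffs Gam c) (Inr i) (Inr j) z = 0"
  unfolding ricci_comp_def curv_comp_formula[where \<omega>="conn_coeffs Gam c", OF w0]
  by (simp add: sumP vf_const)

lemma ric2:
  assumes "\<And>h i j. Gam h i j differentiable (at (fst z))"
  shows "ricci_comp Gam (conn_coeffs Gam c) (Inr i) (Inl j) z = 0"
  unfolding ricci_comp_def curv_comp_formula[where \<omega>="conn_coeffs Gam c", OF w0]
  by (simp add: sumP vf_const cd_const vf_Inr cd_fst cd_fst_neg assms del: minus_apply)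

lemma ric3:
  assumes "\<And>h i j. Gam h i j differentiable (at (fst z))"
  shows "ricci_comp Gam (conn_coeffs Gam c) (Inl i) (Inr j) z = 0"
  unfolding ricci_comp_def curv_comp_formula[where \<omega>="conn_coeffs Gam c", OF w0]
  by (simp add: sumP vf_const cd_const vf_Inr cd_fst cd_fst_neg assms del: minus_apply)

definition Binv :: "(('n::finite) \<Rightarrow> 'n \<Rightarrow> real^'n \<Rightarrow> real) \<Rightarrow> 'n pt \<Rightarrow> real^('n gidx)^('n gidx)" where
  "Binv c z = (\<chi> \<alpha> \<beta>.
     (case \<alpha> of
        Inl i \<Rightarrow> (case \<beta> of Inl j \<Rightarrow> 0 | Inr j \<Rightarrow> (if i = j then 1 else 0))
      | Inr i \<Rightarrow> (case \<beta> of Inl j \<Rightarrow> (if i = j then 1 else 0) | Inr j \<Rightarrow> - c i j (fst z))))"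

lemma inv1: "mod_riem_ext c z ** Binv c z = mat 1"
unfolding vec_eq_iff proof (intro allI)
  fix a b :: "'a gidx"
  show "(mod_riem_ext c z ** Binv c z) $ a $ b = mat 1 $ a $ b"
    unfolding matrix_matrix_mult_def mat_def
    by (cases a; cases b) (simp_all add: sumP mod_riem_ext_def Binv_def sum_negf)
qed

lemma inv2: "Binv c z ** mod_riem_ext c z = mat 1"
unfolding vec_eq_iff proof (intro allI)
  fix a b :: "'a gidx"
  show "(Binv c z ** mod_riem_ext c z) $ a $ b = mat 1 $ a $ b"
    unfolding matrix_matrix_mult_def mat_def
    by (cases a; cases b) (simp_all add: sumP mod_riem_ext_def Binv_def sum_negf)
qed

lemma minv: "matrix_inv (mod_riem_ext c z) = Binv c z"
proof -
  let ?A = "mod_riem_ext c z"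
  have ex: "\<exists>A'. ?A ** A' = mat 1 \<and> A' ** ?A = mat 1" using inv1 inv2 by blast
  define A' where "A' = matrix_inv ?A"
  have h: "?A ** A' = mat 1 \<and> A' ** ?A = mat 1"
    unfolding A'_def matrix_inv_def using someI_ex[OF ex] .
  have "A' = A' ** (?A ** Binv c z)" by (simp add: inv1)
  also have "\<dots> = (A' ** ?A) ** Binv c z" by (simp add: matrix_mul_assoc)
  also have "\<dots> = Binv c z" using h by simp
  finally show ?thesis unfolding A'_def .
qed

theorem theorem4:
  fixes U :: "(real^'n) set"
    and Gam :: "'n \<Rightarrow> 'n \<Rightarrow> 'n \<Rightarrow> real^'n \<Rightarrow> real"
    and c :: "'n \<Rightarrow> 'n \<Rightarrow> real^'n \<Rightarrow> real"
  assumes "open U"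
    and "\<And>h i j. smooth_fun_on (Gam h i j) U"
    and "\<And>i j. smooth_fun_on (c i j) U"
    and "\<And>h i j x. x \<in> U \<Longrightarrow> Gam h i j x = Gam h j i x"
    and "\<And>i j x. x \<in> U \<Longrightarrow> c i j x = c j i x"
    and "x \<in> U"
  shows "scalar_curv Gam c (x, p) = 0"
proof -
  have d: "\<And>h i j. Gam h i j differentiable (at (fst (x, p)))"
  proof -
    fix h i j
    have "Ck_on (Suc 0) (Gam h i j) U" using assms(2) smooth_fun_on_def by blast
    then show "Gam h i j differentiable (at (fst (x, p)))" using assms(6) by simp
  qed
  show ?thesis
    unfolding scalar_curv_def minv
    by (simp add: sumP Binv_def ric1 ric2[OF d] ric3[OF d])
qed

end
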